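(* Let $p\in[1,\infty)$, $s>2p$, let $\gamma_S$ be a finite Borel measure on $S$ with $\gamma_S(S)>0$, and let $\mu\in\mathcal P_s(X)$. Let $X_1,\dots,X_n$ be i.i.d. with law $\mu$ and $\mu^n:=\frac1n\sum_{k=1}^n\delta_{X_k}$. Then $$\mathbb E\,SW_p^\gamma(\mu^n,\mu)\le C\,n^{-\frac1{2p}},$$ where $C$ depends only on $p$, $s$ and $M_s(\mu)$.
   Context: $X$ is an infinite-dimensional separable real Hilbert space with inner product $\langle\cdot,\cdot\rangle$ and norm $\|\cdot\|$; $S=\{x\in X:\|x\|=1\}$. $\mathcal P_s(X)$ is the set of Borel probability measures on $X$ with $M_s(\mu):=\int_X\|x\|^s\,d\mu<\infty$. For $\theta\in S$, $P_\theta(x)=\langle\theta,x\rangle$, $\hat\mu_\theta:=P_\theta\#\mu$, and $$SW_p^\gamma(\mu,\nu)=\Big(\frac{1}{\gamma_S(S)}\int_S W_p^p(\hat\mu_\theta,\hat\nu_\theta)\,\gamma_S(d\theta)\Big)^{1/p},$$ with $W_p$ the $p$-Wasserstein distance between probability measures on $\mathbb R$. *)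

theory Defs
  imports "HOL-Probability.Probability"
begin

definition couplings :: "real measure \<Rightarrow> real measure \<Rightarrow> (real \<times> real) measure set" where
  "couplings \<mu> \<nu> = {\<pi>. prob_space \<pi> \<and> sets \<pi> = sets (borel :: (real \<times> real) measure)
      \<and> distr \<pi> borel fst = \<mu> \<and> distr \<pi> borel snd = \<nu>}"

definition Wasserstein_pow :: "real \<Rightarrow> real measure \<Rightarrow> real measure \<Rightarrow> ennreal" where
  "Wasserstein_pow p \<mu> \<nu> = (INF \<pi>\<in>couplings \<mu> \<nu>. \<integral>\<^sup>+ z. ennreal (\<bar>fst z - snd z\<bar> powr p) \<partial>\<pi>)"

definition proj_measure :: "'a::real_inner measure \<Rightarrow> 'a \<Rightarrow> real measure" where
  "proj_measure \<mu> \<theta> = distr \<mu> borel (\<lambda>x. \<theta> \<bullet> x)"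

definition sliced_W_pow :: "real \<Rightarrow> 'a::real_inner measure \<Rightarrow> 'a measure \<Rightarrow> 'a measure \<Rightarrow> ennreal" where
  "sliced_W_pow p \<gamma> \<mu> \<nu> =
     (\<integral>\<^sup>+ \<theta>. Wasserstein_pow p (proj_measure \<mu> \<theta>) (proj_measure \<nu> \<theta>) \<partial>\<gamma>) / emeasure \<gamma> (sphere 0 1)"

definition sliced_W :: "real \<Rightarrow> 'a::real_inner measure \<Rightarrow> 'a measure \<Rightarrow> 'a measure \<Rightarrow> ennreal" where
  "sliced_W p \<gamma> \<mu> \<nu> =
     (if sliced_W_pow p \<gamma> \<mu> \<nu> = \<infinity> then \<infinity>
      else ennreal ((enn2real (sliced_W_pow p \<gamma> \<mu> \<nu>)) powr (1 / p)))"

definition empirical_measure :: "'a list \<Rightarrow> 'a measure" where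
  "empirical_measure xs = measure_pmf (pmf_of_multiset (mset xs))"

definition moment :: "real \<Rightarrow> 'a::real_normed_vector measure \<Rightarrow> ennreal" where
  "moment s \<mu> = (\<integral>\<^sup>+ x. ennreal (norm x powr s) \<partial>\<mu>)"

end

theory Submission
  imports Defs
begin


lemma pow_int0:
  fixes p L :: real assumes p: "p \<ge> 1" and L: "L \<ge> 0"
  shows "(\<integral>\<^sup>+x. ennreal (x powr (p-1)) * indicator {0<..<L} x \<partial>lborel) = ennreal (L powr p / p)"
proof -
  have "(\<integral>\<^sup>+x. ennreal (x powr (p-1)) * indicator {0<..<L} x \<partial>lborel) =
        (\<integral>\<^sup>+x. ennreal (x powr (p-1)) * indicator {0..L} x \<partial>lborel)"
    apply (rule nn_integral_cong_AE)
    using AE_lborel_singleton[of 0] AE_lborel_singleton[of L]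
    by eventually_elim (auto simp: indicator_def)
  also have "\<dots> = ennreal (L powr (p - 1 + 1) / (p - 1 + 1))"
    by (rule nn_integral_has_integral_lebesgue') (use p L has_integral_powr_from_0[of "p-1" L] in auto)
  finally show ?thesis by simp
qed



lemma half_int:
  fixes p m L :: real assumes p: "p \<ge> 1" and L: "L \<ge> 0"
  shows "(\<integral>\<^sup>+x. ennreal ((x - m) powr (p-1)) * indicator {m<..<m+L} x \<partial>lborel) = ennreal (L powr p / p)"
    and "(\<integral>\<^sup>+x. ennreal ((m - x) powr (p-1)) * indicator {m-L<..<m} x \<partial>lborel) = ennreal (L powr p / p)"
proof -
  have "(\<integral>\<^sup>+x. ennreal ((x - m) powr (p-1)) * indicator {m<..<m+L} x \<partial>lborel)
     = (\<integral>\<^sup>+x. ennreal ((x - m) powr (p-1)) * indicator {m<..<m+L} x \<partial>distr lborel borel ((+) m))"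
    by (simp add: lborel_distr_plus)
  also have "\<dots> = (\<integral>\<^sup>+x. ennreal (x powr (p-1)) * indicator {0<..<L} x \<partial>lborel)"
    by (subst nn_integral_distr) (auto intro!: nn_integral_cong simp: indicator_def)
  finally show "(\<integral>\<^sup>+x. ennreal ((x - m) powr (p-1)) * indicator {m<..<m+L} x \<partial>lborel) = ennreal (L powr p / p)"
    using pow_int0[OF p L] by simp
  have "(\<integral>\<^sup>+x. ennreal ((m - x) powr (p-1)) * indicator {m-L<..<m} x \<partial>lborel)
     = (\<integral>\<^sup>+x. ennreal ((m - x) powr (p-1)) * indicator {m-L<..<m} x \<partial>distr lborel borel ((+) m))"
    by (simp add: lborel_distr_plus)
  also have "\<dots> = (\<integral>\<^sup>+x. ennreal ((- x) powr (p-1)) * indicator {-L<..<0} x \<partial>lborel)"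
    by (subst nn_integral_distr) (auto intro!: nn_integral_cong simp: indicator_def)
  also have "\<dots> = (\<integral>\<^sup>+x. ennreal ((- x) powr (p-1)) * indicator {-L<..<0} x \<partial>distr lborel borel uminus)"
    by (simp add: lborel_distr_uminus)
  also have "\<dots> = (\<integral>\<^sup>+x. ennreal (x powr (p-1)) * indicator {0<..<L} x \<partial>lborel)"
    by (subst nn_integral_distr) (auto intro!: nn_integral_cong simp: indicator_def)
  finally show "(\<integral>\<^sup>+x. ennreal ((m - x) powr (p-1)) * indicator {m-L<..<m} x \<partial>lborel) = ennreal (L powr p / p)"
    using pow_int0[OF p L] by simp
qed

lemma pt_bound:
  fixes p a b :: real assumes p: "p \<ge> 1"
  shows "ennreal (\<bar>a - b\<bar> powr p) \<le> ennreal (p * 2 powr p) *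
     (\<integral>\<^sup>+x. ennreal (\<bar>x\<bar> powr (p-1)) * indicator {min a b..<max a b} x \<partial>lborel)"
proof -
  define lo hi where "lo = min a b" "hi = max a b"
  define L m where "L = (hi - lo)/2" "m = (hi + lo)/2"
  have lh: "lo \<le> hi" using lo_hi_def by auto
  have mL: "m + L = hi" "m - L = lo" using L_m_def by (auto simp: field_simps)
  have lm: "lo \<le> m" "m \<le> hi" using L_m_def lh by auto
  have L0: "L \<ge> 0" using lo_hi_def L_m_def by auto
  have ab: "\<bar>a - b\<bar> = 2 * L" using lo_hi_def L_m_def by auto
  have key: "ennreal (L powr p / p) \<le> (\<integral>\<^sup>+x. ennreal (\<bar>x\<bar> powr (p-1)) * indicator {lo..<hi} x \<partial>lborel)"
  proof (cases "m \<ge> 0")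
    case True
    have "ennreal (L powr p / p) = (\<integral>\<^sup>+x. ennreal ((x - m) powr (p-1)) * indicator {m<..<m+L} x \<partial>lborel)"
      using half_int(1)[OF p L0, of m] by simp
    also have "\<dots> \<le> (\<integral>\<^sup>+x. ennreal (\<bar>x\<bar> powr (p-1)) * indicator {lo..<hi} x \<partial>lborel)"
      using True p by (intro nn_integral_mono) (use lh lm in \<open>auto simp: indicator_def mL intro!: powr_mono2\<close>)
    finally show ?thesis .
  next
    case False
    have "ennreal (L powr p / p) = (\<integral>\<^sup>+x. ennreal ((m - x) powr (p-1)) * indicator {m-L<..<m} x \<partial>lborel)"
      using half_int(2)[OF p L0, of m] by simp
    also have "\<dots> \<le> (\<integral>\<^sup>+x. ennreal (\<bar>x\<bar> powr (p-1)) * indicator {lo..<hi} x \<partial>lborel)"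
      using False p by (intro nn_integral_mono) (use lh lm in \<open>auto simp: indicator_def mL intro!: powr_mono2\<close>)
    finally show ?thesis .
  qed
  have "\<bar>a - b\<bar> powr p = p * 2 powr p * (L powr p / p)"
    using p L0 by (simp add: ab powr_mult)
  hence "ennreal (\<bar>a - b\<bar> powr p) = ennreal (p * 2 powr p) * ennreal (L powr p / p)"
    using p L0 by (simp add: ennreal_mult[symmetric])
  also have "\<dots> \<le> ennreal (p * 2 powr p) * (\<integral>\<^sup>+x. ennreal (\<bar>x\<bar> powr (p-1)) * indicator {lo..<hi} x \<partial>lborel)"
    by (intro mult_left_mono key) auto
  finally show ?thesis using lo_hi_def by simp
qed



lemma W_bound:
  fixes p :: real and \<nu>1 \<nu>2 :: "real measure"
  assumes p: "p \<ge> 1" and d1: "real_distribution \<nu>1" and d2: "real_distribution \<nu>2"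
  shows "Wasserstein_pow p \<nu>1 \<nu>2 \<le> ennreal (p * 2 powr p) *
     (\<integral>\<^sup>+x. ennreal (\<bar>x\<bar> powr (p-1) * \<bar>cdf \<nu>1 x - cdf \<nu>2 x\<bar>) \<partial>lborel)"
proof -
  interpret A: cdf_distribution \<nu>1 using d1 by (simp add: cdf_distribution_def)
  interpret B: cdf_distribution \<nu>2 using d2 by (simp add: cdf_distribution_def)
  define U where "U = restrict_space lborel {0<..<1::real}"
  interpret U: prob_space U
    by (auto simp add: U_def emeasure_restrict_space space_restrict_space intro!: prob_spaceI)
  have bU: "borel_measurable U = borel_measurable (restrict_space borel {0<..<1})" unfolding U_def
    by (rule measurable_cong_sets) (simp_all add: sets_restrict_space)
  have mI1[measurable]: "A.I \<in> borel_measurable U" by (subst bU) (rule A.measurable_CI)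
  have mI2[measurable]: "B.I \<in> borel_measurable U" by (subst bU) (rule B.measurable_CI)
  define \<pi> where "\<pi> = distr U borel (\<lambda>u. (A.I u, B.I u))"
  have mP[measurable]: "(\<lambda>u. (A.I u, B.I u)) \<in> measurable U (borel :: (real \<times> real) measure)"
    by measurable
  have mfst[measurable]: "fst \<in> borel_measurable (borel :: (real \<times> real) measure)"
    by (subst borel_prod[symmetric]) simp
  have msnd[measurable]: "snd \<in> borel_measurable (borel :: (real \<times> real) measure)"
    by (subst borel_prod[symmetric]) simp
  have cpl: "\<pi> \<in> couplings \<nu>1 \<nu>2"
    unfolding couplings_def
  proof (intro CollectI conjI)
    show "prob_space \<pi>" unfolding \<pi>_def by (rule U.prob_space_distr) simp
    show "sets \<pi> = sets borel" unfolding \<pi>_def by simp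
    show "distr \<pi> borel fst = \<nu>1" unfolding \<pi>_def
      by (subst distr_distr) (simp_all add: comp_def A.distr_I_eq_M[folded U_def])
    show "distr \<pi> borel snd = \<nu>2" unfolding \<pi>_def
      by (subst distr_distr) (simp_all add: comp_def B.distr_I_eq_M[folded U_def])
  qed
  have mpred[measurable]: "Measurable.pred (U \<Otimes>\<^sub>M borel) (\<lambda>z. snd z \<in> {min (A.I (fst z)) (B.I (fst z))..<max (A.I (fst z)) (B.I (fst z))})"
    by (simp only: atLeastLessThan_iff) measurable
  from cpl have "Wasserstein_pow p \<nu>1 \<nu>2 \<le> (\<integral>\<^sup>+ z. ennreal (\<bar>fst z - snd z\<bar> powr p) \<partial>\<pi>)"
    unfolding Wasserstein_pow_def by (rule INF_lower)
  also have "\<dots> = (\<integral>\<^sup>+ u. ennreal (\<bar>A.I u - B.I u\<bar> powr p) \<partial>U)"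
    unfolding \<pi>_def by (subst nn_integral_distr) auto
  also have "\<dots> \<le> (\<integral>\<^sup>+ u. ennreal (p * 2 powr p) *
     (\<integral>\<^sup>+x. ennreal (\<bar>x\<bar> powr (p-1)) * indicator {min (A.I u) (B.I u)..<max (A.I u) (B.I u)} x \<partial>lborel) \<partial>U)"
    by (intro nn_integral_mono pt_bound p)
  also have "\<dots> = ennreal (p * 2 powr p) * (\<integral>\<^sup>+ u.
     (\<integral>\<^sup>+x. ennreal (\<bar>x\<bar> powr (p-1)) * indicator {min (A.I u) (B.I u)..<max (A.I u) (B.I u)} x \<partial>lborel) \<partial>U)"
    by (rule nn_integral_cmult) measurable
  also have "(\<integral>\<^sup>+ u.
     (\<integral>\<^sup>+x. ennreal (\<bar>x\<bar> powr (p-1)) * indicator {min (A.I u) (B.I u)..<max (A.I u) (B.I u)} x \<partial>lborel) \<partial>U)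
    = (\<integral>\<^sup>+x. (\<integral>\<^sup>+ u. ennreal (\<bar>x\<bar> powr (p-1)) * indicator {min (A.I u) (B.I u)..<max (A.I u) (B.I u)} x \<partial>U) \<partial>lborel)"
  proof -
    interpret pair_sigma_finite U lborel by unfold_locales
    show ?thesis
      by (rule Fubini'[symmetric]) measurable
  qed
  also have "\<dots> \<le> (\<integral>\<^sup>+x. ennreal (\<bar>x\<bar> powr (p-1) * \<bar>cdf \<nu>1 x - cdf \<nu>2 x\<bar>) \<partial>lborel)"
  proof (rule nn_integral_mono)
    fix x :: real
    have pt: "indicator {min (A.I u) (B.I u)..<max (A.I u) (B.I u)} x
       \<le> (indicator ({min (cdf \<nu>1 x) (cdf \<nu>2 x)<..max (cdf \<nu>1 x) (cdf \<nu>2 x)} \<inter> {0<..<1}) u :: ennreal)"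
      if u: "u \<in> space U" for u
    proof -
      have u01: "0 < u" "u < 1" using u by (auto simp: U_def space_restrict_space)
      have e1: "u \<le> cdf \<nu>1 x \<longleftrightarrow> A.I u \<le> x" by (rule A.pseudoinverse[OF u01])
      have e2: "u \<le> cdf \<nu>2 x \<longleftrightarrow> B.I u \<le> x" by (rule B.pseudoinverse[OF u01])
      show ?thesis using e1 e2 u01 by (auto simp: indicator_def)
    qed
    have "(\<integral>\<^sup>+ u. ennreal (\<bar>x\<bar> powr (p-1)) * indicator {min (A.I u) (B.I u)..<max (A.I u) (B.I u)} x \<partial>U)
       \<le> (\<integral>\<^sup>+ u. ennreal (\<bar>x\<bar> powr (p-1)) * indicator ({min (cdf \<nu>1 x) (cdf \<nu>2 x)<..max (cdf \<nu>1 x) (cdf \<nu>2 x)} \<inter> {0<..<1}) u \<partial>U)"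
      by (intro nn_integral_mono mult_left_mono pt) auto
    also have "\<dots> = ennreal (\<bar>x\<bar> powr (p-1)) * emeasure U ({min (cdf \<nu>1 x) (cdf \<nu>2 x)<..max (cdf \<nu>1 x) (cdf \<nu>2 x)} \<inter> {0<..<1})"
      by (subst nn_integral_cmult_indicator) (auto simp: U_def sets_restrict_space)
    also have "\<dots> \<le> ennreal (\<bar>x\<bar> powr (p-1)) * emeasure lborel {min (cdf \<nu>1 x) (cdf \<nu>2 x)<..max (cdf \<nu>1 x) (cdf \<nu>2 x)}"
    proof (intro mult_left_mono)
      have "emeasure U ({min (cdf \<nu>1 x) (cdf \<nu>2 x)<..max (cdf \<nu>1 x) (cdf \<nu>2 x)} \<inter> {0<..<1})
         = emeasure lborel ({min (cdf \<nu>1 x) (cdf \<nu>2 x)<..max (cdf \<nu>1 x) (cdf \<nu>2 x)} \<inter> {0<..<1})"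
        unfolding U_def by (rule emeasure_restrict_space) auto
      also have "\<dots> \<le> emeasure lborel {min (cdf \<nu>1 x) (cdf \<nu>2 x)<..max (cdf \<nu>1 x) (cdf \<nu>2 x)}"
        by (rule emeasure_mono) auto
      finally show "emeasure U ({min (cdf \<nu>1 x) (cdf \<nu>2 x)<..max (cdf \<nu>1 x) (cdf \<nu>2 x)} \<inter> {0<..<1})
         \<le> emeasure lborel {min (cdf \<nu>1 x) (cdf \<nu>2 x)<..max (cdf \<nu>1 x) (cdf \<nu>2 x)}" .
    qed simp
    also have "\<dots> = ennreal (\<bar>x\<bar> powr (p-1) * \<bar>cdf \<nu>1 x - cdf \<nu>2 x\<bar>)"
      by (simp add: ennreal_mult[symmetric] max_def min_def)
    finally show "(\<integral>\<^sup>+ u. ennreal (\<bar>x\<bar> powr (p-1)) * indicator {min (A.I u) (B.I u)..<max (A.I u) (B.I u)} x \<partial>U)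
       \<le> ennreal (\<bar>x\<bar> powr (p-1) * \<bar>cdf \<nu>1 x - cdf \<nu>2 x\<bar>)" .
  qed
  finally show ?thesis by (simp add: mult_left_mono)
qed



lemma (in prob_space) var_bound:
  fixes X :: "nat \<Rightarrow> 'a \<Rightarrow> 'b::topological_space" and A :: "'b set" and n :: nat and v q :: real
  assumes ind: "indep_vars (\<lambda>_. borel) X {1..n}"
    and dist: "\<And>k. k \<in> {1..n} \<Longrightarrow> distr M borel (X k) = \<mu>"
    and A: "A \<in> sets borel" and q: "measure \<mu> A = q" and n: "n \<ge> 1"
    and v: "v > 0" "q * (1 - q) \<le> v"
  shows "(\<integral>\<^sup>+\<omega>. ennreal \<bar>(\<Sum>k\<in>{1..n}. indicator A (X k \<omega>)) / real n - q\<bar> \<partial>M) \<le> ennreal (sqrt (v / n))"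
proof -
  have Xm[measurable]: "X k \<in> borel_measurable M" if "k \<in> {1..n}" for k
    using ind that unfolding indep_vars_def by auto
  define W where "W k \<omega> = indicator A (X k \<omega>) - q" for k \<omega>
  have Wm[measurable]: "W k \<in> borel_measurable M" if "k \<in> {1..n}" for k
    unfolding W_def using that A by measurable
  have q01: "0 \<le> q" "q \<le> 1"
  proof -
    interpret D: prob_space "distr M borel (X 1)" using n by (intro prob_space_distr) auto
    show "0 \<le> q" "q \<le> 1" using q dist[of 1] n D.prob_le_1 by auto
  qed
  have Wb: "\<bar>W k \<omega>\<bar> \<le> 1" for k \<omega> using q01 by (auto simp: W_def indicator_def)
  have Wint: "integrable M (\<lambda>\<omega>. W j \<omega> * W k \<omega>)" if "j \<in> {1..n}" "k \<in> {1..n}" for j k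
    using that Wb by (intro integrable_const_bound[where B=1]) (auto simp: abs_mult intro!: mult_le_one)
  have Wint1: "integrable M (W k)" if "k \<in> {1..n}" for k
    using that Wb by (intro integrable_const_bound[where B=1]) auto
  have Eind: "expectation (\<lambda>\<omega>. indicator A (X k \<omega>)) = q" if k: "k \<in> {1..n}" for k
  proof -
    interpret D: prob_space "distr M borel (X k)" using k by (intro prob_space_distr) auto
    have "expectation (\<lambda>\<omega>. indicator A (X k \<omega>)) = (integral\<^sup>L (distr M borel (X k)) (indicator A) :: real)"
      using integral_distr[of "X k" M borel "indicator A :: _ \<Rightarrow> real"] k A by (simp del: integral_indicator)
    also have "\<dots> = measure (distr M borel (X k)) A"
      using A by (simp add: D.emeasure_finite)
    finally show ?thesis using q dist[OF k] by simp
  qed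
  have EW: "expectation (W k) = 0" if k: "k \<in> {1..n}" for k
  proof -
    have "expectation (W k) = expectation (\<lambda>\<omega>. indicator A (X k \<omega>) :: real) - expectation (\<lambda>\<omega>. q)"
      unfolding W_def using k A q01
      by (intro Bochner_Integration.integral_diff integrable_const_bound[where B=1]) auto
    then show ?thesis using Eind[OF k] by (simp add: prob_space)
  qed
  have EW2: "expectation (\<lambda>\<omega>. W k \<omega> * W k \<omega>) = q * (1 - q)" if k: "k \<in> {1..n}" for k
  proof -
    have "(\<lambda>\<omega>. W k \<omega> * W k \<omega>) = (\<lambda>\<omega>. (1 - 2*q) * indicator A (X k \<omega>) + q*q)"
      by (auto simp: W_def indicator_def fun_eq_iff algebra_simps)
    hence "expectation (\<lambda>\<omega>. W k \<omega> * W k \<omega>) = (1 - 2*q) * expectation (\<lambda>\<omega>. indicator A (X k \<omega>)) + expectation (\<lambda>\<omega>. q*q)"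
      using k A
      by (simp add: Bochner_Integration.integral_add integrable_const_bound[where B=1])
    then show ?thesis using Eind[OF k] by (simp add: prob_space algebra_simps)
  qed
  have EWW: "expectation (\<lambda>\<omega>. W j \<omega> * W k \<omega>) = 0" if jk: "j \<in> {1..n}" "k \<in> {1..n}" "j \<noteq> k" for j k
  proof -
    have iA: "indep_vars (\<lambda>_. borel) (\<lambda>i \<omega>. indicator A (X i \<omega>) - q) {1..n}"
      using A by (intro indep_vars_compose2[OF ind]) auto
    hence iW: "indep_vars (\<lambda>_. borel) W {j, k}"
      unfolding W_def[abs_def] using jk by (intro indep_vars_subset[OF iA]) auto
    have "expectation (\<lambda>\<omega>. \<Prod>i\<in>{j,k}. W i \<omega>) = (\<Prod>i\<in>{j,k}. expectation (W i))"
      using jk by (intro indep_vars_lebesgue_integral iW Wint1) auto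
    then show ?thesis using jk EW by simp
  qed
  have EWW': "expectation (\<lambda>\<omega>. W j \<omega> * W k \<omega>) = (if j = k then q * (1 - q) else 0)"
    if jk: "j \<in> {1..n}" "k \<in> {1..n}" for j k
    using EWW EW2 jk by auto
  define S where "S \<omega> = (\<Sum>k\<in>{1..n}. W k \<omega>)" for \<omega>
  have Sm[measurable]: "S \<in> borel_measurable M" unfolding S_def by measurable
  have ES2: "expectation (\<lambda>\<omega>. (S \<omega>)\<^sup>2) = n * (q * (1 - q))"
  proof -
    have "expectation (\<lambda>\<omega>. (S \<omega>)\<^sup>2) = expectation (\<lambda>\<omega>. \<Sum>j\<in>{1..n}. \<Sum>k\<in>{1..n}. W j \<omega> * W k \<omega>)"
      unfolding S_def power2_eq_square sum_product by simp
    also have "\<dots> = (\<Sum>j\<in>{1..n}. \<Sum>k\<in>{1..n}. expectation (\<lambda>\<omega>. W j \<omega> * W k \<omega>))"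
    proof -
      have "expectation (\<lambda>\<omega>. \<Sum>j\<in>{1..n}. \<Sum>k\<in>{1..n}. W j \<omega> * W k \<omega>) = (\<Sum>j\<in>{1..n}. expectation (\<lambda>\<omega>. \<Sum>k\<in>{1..n}. W j \<omega> * W k \<omega>))"
        using Wint by (intro Bochner_Integration.integral_sum Bochner_Integration.integrable_sum) auto
      also have "\<dots> = (\<Sum>j\<in>{1..n}. \<Sum>k\<in>{1..n}. expectation (\<lambda>\<omega>. W j \<omega> * W k \<omega>))"
        using Wint by (intro sum.cong refl Bochner_Integration.integral_sum) auto
      finally show ?thesis .
    qed
    also have "\<dots> = (\<Sum>j\<in>{1..n}. \<Sum>k\<in>{1..n}. (if j = k then q * (1 - q) else 0))"
      using EWW' by (intro sum.cong refl) auto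
    also have "\<dots> = n * (q * (1 - q))" by simp
    finally show ?thesis .
  qed
  define D where "D \<omega> = S \<omega> / n" for \<omega>
  have Deq: "(\<Sum>k\<in>{1..n}. indicator A (X k \<omega>)) / real n - q = D \<omega>" for \<omega>
    using n by (simp add: D_def S_def W_def sum_subtractf field_simps)
  have ED2: "expectation (\<lambda>\<omega>. (D \<omega>)\<^sup>2) = q * (1 - q) / n"
    using ES2 n by (simp add: D_def power_divide power2_eq_square)
  define \<epsilon> where "\<epsilon> = sqrt (v / n)"
  have eps: "\<epsilon> > 0" using v n by (simp add: \<epsilon>_def)
  have S2int: "integrable M (\<lambda>\<omega>. (S \<omega>)\<^sup>2)"
  proof -
    have "\<bar>S \<omega>\<bar> \<le> n" for \<omega>
    proof -
      have "\<bar>S \<omega>\<bar> \<le> (\<Sum>k\<in>{1..n}. \<bar>W k \<omega>\<bar>)" unfolding S_def by (rule sum_abs)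
      also have "\<dots> \<le> (\<Sum>k\<in>{1..n}. 1)" using Wb by (intro sum_mono) auto
      finally show ?thesis by simp
    qed
    hence "\<bar>(S \<omega>)\<^sup>2\<bar> \<le> real n ^ 2" for \<omega>
      by (metis abs_le_square_iff abs_of_nat abs_power2 power2_abs)
    thus ?thesis by (intro integrable_const_bound[where B="real n ^ 2"]) auto
  qed
  have pt: "ennreal \<bar>D \<omega>\<bar> \<le> ennreal (((D \<omega>)\<^sup>2 / \<epsilon> + \<epsilon>) / 2)" for \<omega>
  proof (rule ennreal_leI)
    have "0 \<le> (\<bar>D \<omega>\<bar> - \<epsilon>)\<^sup>2 / \<epsilon>" using eps by simp
    also have "(\<bar>D \<omega>\<bar> - \<epsilon>)\<^sup>2 / \<epsilon> = (D \<omega>)\<^sup>2 / \<epsilon> + \<epsilon> - 2 * \<bar>D \<omega>\<bar>"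
      using eps by (simp add: power2_eq_square field_simps)
    finally show "\<bar>D \<omega>\<bar> \<le> ((D \<omega>)\<^sup>2 / \<epsilon> + \<epsilon>) / 2" by simp
  qed
  have "(\<integral>\<^sup>+\<omega>. ennreal \<bar>(\<Sum>k\<in>{1..n}. indicator A (X k \<omega>)) / real n - q\<bar> \<partial>M)
      = (\<integral>\<^sup>+\<omega>. ennreal \<bar>D \<omega>\<bar> \<partial>M)" using Deq by (intro nn_integral_cong) metis
  also have "\<dots> \<le> (\<integral>\<^sup>+\<omega>. ennreal (((D \<omega>)\<^sup>2 / \<epsilon> + \<epsilon>) / 2) \<partial>M)"
    by (intro nn_integral_mono pt)
  also have "\<dots> = ennreal (expectation (\<lambda>\<omega>. ((D \<omega>)\<^sup>2 / \<epsilon> + \<epsilon>) / 2))"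
  proof (rule nn_integral_eq_integral)
    show "integrable M (\<lambda>\<omega>. ((D \<omega>)\<^sup>2 / \<epsilon> + \<epsilon>) / 2)"
      using S2int by (simp add: D_def power_divide)
    show "AE \<omega> in M. 0 \<le> ((D \<omega>)\<^sup>2 / \<epsilon> + \<epsilon>) / 2" using eps by auto
  qed
  also have "expectation (\<lambda>\<omega>. ((D \<omega>)\<^sup>2 / \<epsilon> + \<epsilon>) / 2) = (expectation (\<lambda>\<omega>. (D \<omega>)\<^sup>2) / \<epsilon> + \<epsilon>) / 2"
    using S2int by (simp add: D_def power_divide prob_space)
  also have "\<dots> \<le> (v / n / \<epsilon> + \<epsilon>) / 2"
    using ED2 v eps n by (intro divide_right_mono add_right_mono) (auto simp: field_simps)
  also have "\<dots> = \<epsilon>"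
    using v n eps unfolding \<epsilon>_def by (simp add: field_simps real_sqrt_mult[symmetric] flip: real_sqrt_mult)
  finally show ?thesis unfolding \<epsilon>_def using ennreal_leI by blast
qed



lemma tail_bound:
  fixes \<mu> :: "'a::{real_inner, polish_space} measure" and \<theta> :: 'a
  assumes "prob_space \<mu>" "sets \<mu> = sets borel" "moment s \<mu> = ennreal M" "s \<ge> 0" "norm \<theta> = 1" "t > 0"
  shows "measure \<mu> {y. t \<le> \<bar>\<theta> \<bullet> y\<bar>} \<le> max M 0 / t powr s"
proof -
  interpret prob_space \<mu> by fact
  have sp: "space \<mu> = UNIV" using assms(2) sets_eq_imp_space_eq by fastforce
  have ms[measurable]: "{y. t \<le> \<bar>\<theta> \<bullet> y\<bar>} \<in> sets \<mu>"
    using assms(2) by (simp add: sets_eq_imp_space_eq) measurable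
  have "ennreal (t powr s) * emeasure \<mu> {y. t \<le> \<bar>\<theta> \<bullet> y\<bar>}
     = (\<integral>\<^sup>+y. ennreal (t powr s) * indicator {y. t \<le> \<bar>\<theta> \<bullet> y\<bar>} y \<partial>\<mu>)"
    by (rule nn_integral_cmult_indicator[symmetric]) (rule ms)
  also have "\<dots> \<le> (\<integral>\<^sup>+y. ennreal (norm y powr s) \<partial>\<mu>)"
  proof (rule nn_integral_mono)
    fix y
    have "\<bar>\<theta> \<bullet> y\<bar> \<le> norm y" using Cauchy_Schwarz_ineq2[of \<theta> y] assms(5) by simp
    then show "ennreal (t powr s) * indicator {y. t \<le> \<bar>\<theta> \<bullet> y\<bar>} y \<le> ennreal (norm y powr s)"
      using assms(4,6) by (auto simp: indicator_def intro!: ennreal_leI powr_mono2)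
  qed
  also have "\<dots> = ennreal M" using assms(3) by (simp add: moment_def)
  also have "\<dots> = ennreal (max M 0)" by (cases "M \<ge> 0") (auto simp: ennreal_neg max_def)
  finally have "ennreal (t powr s * measure \<mu> {y. t \<le> \<bar>\<theta> \<bullet> y\<bar>}) \<le> ennreal (max M 0)"
    by (simp add: emeasure_eq_measure ennreal_mult)
  hence "t powr s * measure \<mu> {y. t \<le> \<bar>\<theta> \<bullet> y\<bar>} \<le> max M 0"
    by (subst (asm) ennreal_le_iff) auto
  thus ?thesis using assms(6) by (simp add: field_simps)
qed



definition mfun :: "real \<Rightarrow> real \<Rightarrow> real \<Rightarrow> real" where
  "mfun s M x = (if \<bar>x\<bar> \<le> 1 then 1 else (max M 0 + 1) / \<bar>x\<bar> powr s)"

lemma mfun_pos: "mfun s M x > 0"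
  by (auto simp: mfun_def)

lemma Fvar:
  fixes \<mu> :: "'a::{real_inner, polish_space} measure" and \<theta> :: 'a
  assumes "prob_space \<mu>" "sets \<mu> = sets borel" "moment s \<mu> = ennreal M" "s \<ge> 0" "norm \<theta> = 1"
  shows "measure \<mu> {y. \<theta> \<bullet> y \<le> x} * (1 - measure \<mu> {y. \<theta> \<bullet> y \<le> x}) \<le> mfun s M x"
proof -
  interpret prob_space \<mu> by fact
  have sp: "space \<mu> = UNIV" using assms(2) sets_eq_imp_space_eq by fastforce
  have ms[measurable]: "{y. \<theta> \<bullet> y \<le> x} \<in> sets \<mu>" "{y. \<bar>x\<bar> \<le> \<bar>\<theta> \<bullet> y\<bar>} \<in> sets \<mu>"
    using assms(2) by (simp_all add: sets_eq_imp_space_eq) measurable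
  define F where "F = measure \<mu> {y. \<theta> \<bullet> y \<le> x}"
  have F01: "0 \<le> F" "F \<le> 1" unfolding F_def by auto
  have compl: "1 - F = measure \<mu> {y. \<not> \<theta> \<bullet> y \<le> x}"
  proof -
    have "{y. \<not> \<theta> \<bullet> y \<le> x} = space \<mu> - {y. \<theta> \<bullet> y \<le> x}" using sp by auto
    then show ?thesis unfolding F_def using prob_compl[OF ms(1)] by simp
  qed
  show ?thesis
  proof (cases "\<bar>x\<bar> \<le> 1")
    case True
    then show ?thesis using F01 by (simp add: mfun_def F_def[symmetric] mult_le_one)
  next
    case False
    have tb: "measure \<mu> {y. \<bar>x\<bar> \<le> \<bar>\<theta> \<bullet> y\<bar>} \<le> (max M 0 + 1) / \<bar>x\<bar> powr s"
    proof -
      have "measure \<mu> {y. \<bar>x\<bar> \<le> \<bar>\<theta> \<bullet> y\<bar>} \<le> max M 0 / \<bar>x\<bar> powr s"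
        using False assms by (intro tail_bound) auto
      also have "\<dots> \<le> (max M 0 + 1) / \<bar>x\<bar> powr s"
        by (intro divide_right_mono) auto
      finally show ?thesis .
    qed
    have "F * (1 - F) \<le> measure \<mu> {y. \<bar>x\<bar> \<le> \<bar>\<theta> \<bullet> y\<bar>}"
    proof (cases "x > 0")
      case True
      have "F * (1 - F) \<le> 1 - F" using F01 by (simp add: mult_left_le_one_le)
      also have "\<dots> \<le> measure \<mu> {y. \<bar>x\<bar> \<le> \<bar>\<theta> \<bullet> y\<bar>}"
        unfolding compl using True ms(2) by (intro finite_measure_mono) auto
      finally show ?thesis .
    next
      case nx: False
      have "F * (1 - F) \<le> F" using F01 by (simp add: mult_right_le_one_le)
      also have "\<dots> \<le> measure \<mu> {y. \<bar>x\<bar> \<le> \<bar>\<theta> \<bullet> y\<bar>}"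
        unfolding F_def using nx ms(2) by (intro finite_measure_mono) auto
      finally show ?thesis .
    qed
    then show ?thesis using tb False by (simp add: mfun_def F_def[symmetric])
  qed
qed

definition Kc :: "real \<Rightarrow> real \<Rightarrow> real \<Rightarrow> real" where
  "Kc p s M = 2 + 2 * sqrt (max M 0 + 1) * (- 1 / (p - 1 - s / 2 + 1))"

lemma K_bound:
  fixes p s M :: real assumes p: "p \<ge> 1" and s: "s > 2 * p"
  shows "(\<integral>\<^sup>+x. ennreal (\<bar>x\<bar> powr (p-1) * sqrt (mfun s M x)) \<partial>lborel) \<le> ennreal (Kc p s M)"
proof -
  define e where "e = p - 1 - s / 2"
  define M1 where "M1 = max M 0 + 1"
  have e: "e < -1" using s unfolding e_def by simp
  have M1: "M1 > 0" unfolding M1_def by simp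
  have I1: "(\<integral>\<^sup>+x. ennreal (x powr e) * indicator {1..} x \<partial>lborel) = ennreal (-1 / (e + 1))"
    using nn_integral_has_integral_lebesgue'[OF _ has_integral_powr_to_inf[OF e, of 1]] by simp
  have I2: "(\<integral>\<^sup>+x. ennreal ((-x) powr e) * indicator {..-1} x \<partial>lborel) = ennreal (-1 / (e + 1))"
  proof -
    have "(\<integral>\<^sup>+x. ennreal ((-x) powr e) * indicator {..-1} x \<partial>lborel)
       = (\<integral>\<^sup>+x. ennreal ((-x) powr e) * indicator {..-1} x \<partial>distr lborel borel uminus)"
      by (simp add: lborel_distr_uminus)
    also have "\<dots> = (\<integral>\<^sup>+x. ennreal (x powr e) * indicator {1..} x \<partial>lborel)"
      by (subst nn_integral_distr) (auto intro!: nn_integral_cong simp: indicator_def)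
    finally show ?thesis using I1 by simp
  qed
  have I0: "(\<integral>\<^sup>+x. indicator {-1..1::real} x \<partial>lborel) = ennreal 2"
    by (subst nn_integral_indicator) auto
  have pt: "ennreal (\<bar>x\<bar> powr (p-1) * sqrt (mfun s M x))
     \<le> indicator {-1..1} x + ennreal (sqrt M1) * (ennreal (x powr e) * indicator {1..} x + ennreal ((-x) powr e) * indicator {..-1} x)"
    for x
  proof (cases "\<bar>x\<bar> \<le> 1")
    case True
    have "\<bar>x\<bar> powr (p-1) \<le> 1" using True p by (intro powr_le1) auto
    hence "ennreal (\<bar>x\<bar> powr (p-1) * sqrt (mfun s M x)) \<le> indicator {-1..1} x"
      using True by (auto simp: mfun_def indicator_def)
    then show ?thesis by (rule add_increasing2[rotated]) simp
  next
    case False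
    have eq: "\<bar>x\<bar> powr (p-1) * sqrt (mfun s M x) = sqrt M1 * \<bar>x\<bar> powr e"
    proof -
      have "sqrt (mfun s M x) = sqrt M1 / \<bar>x\<bar> powr (s/2)"
      proof -
        have "sqrt (\<bar>x\<bar> powr s) = \<bar>x\<bar> powr (s/2)"
          by (simp add: powr_half_sqrt[symmetric] powr_powr)
        thus ?thesis using False by (simp add: mfun_def M1_def real_sqrt_divide)
      qed
      moreover have "\<bar>x\<bar> powr e = \<bar>x\<bar> powr (p-1) / \<bar>x\<bar> powr (s/2)"
        unfolding e_def by (simp add: powr_diff[symmetric])
      ultimately show ?thesis by simp
    qed
    show ?thesis
    proof (cases "x > 1")
      case True
      then show ?thesis using eq M1 by (simp add: indicator_def ennreal_mult)
    next
      case nx: False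
      with False have "x < -1" by auto
      then show ?thesis using eq M1 by (simp add: indicator_def ennreal_mult)
    qed
  qed
  have "(\<integral>\<^sup>+x. ennreal (\<bar>x\<bar> powr (p-1) * sqrt (mfun s M x)) \<partial>lborel)
     \<le> (\<integral>\<^sup>+x. indicator {-1..1} x + ennreal (sqrt M1) * (ennreal (x powr e) * indicator {1..} x + ennreal ((-x) powr e) * indicator {..-1} x) \<partial>lborel)"
    by (intro nn_integral_mono pt)
  also have "\<dots> = ennreal 2 + ennreal (sqrt M1) * (ennreal (-1 / (e + 1)) + ennreal (-1 / (e + 1)))"
    by (simp add: nn_integral_add nn_integral_cmult I1 I2 del: ennreal_plus)
  also have "\<dots> = ennreal (2 + sqrt M1 * (-1 / (e + 1) + -1 / (e + 1)))"
  proof -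
    have r: "0 \<le> -1 / (e + 1)" using e by (simp add: divide_nonneg_neg)
    define r where "r = -1 / (e + 1)"
    have r0: "0 \<le> r" using r unfolding r_def .
    have "ennreal 2 + ennreal (sqrt M1) * (ennreal r + ennreal r) = ennreal 2 + ennreal (sqrt M1) * ennreal (r + r)"
      using r0 by (simp only: ennreal_plus)
    also have "\<dots> = ennreal 2 + ennreal (sqrt M1 * (r + r))"
      using r0 M1 ennreal_mult[of "sqrt M1" "r + r"] by simp
    also have "\<dots> = ennreal (2 + sqrt M1 * (r + r))"
      using r0 M1 ennreal_plus[of 2 "sqrt M1 * (r + r)"] by simp
    finally show ?thesis unfolding r_def .
  qed
  also have "\<dots> = ennreal (Kc p s M)"
    by (simp add: Kc_def e_def[symmetric] M1_def[symmetric] mult.commute)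
  finally show ?thesis .
qed



lemma emp_prob:
  fixes X :: "nat \<Rightarrow> 'a" assumes n: "n \<ge> 1"
  shows "measure (empirical_measure (map X [1..<n+1])) A = (\<Sum>k\<in>{1..n}. indicator A (X k)) / real n"
proof -
  have fin: "finite {1..n}" "{1..n} \<noteq> {}" using n by auto
  have eq1: "mset (map X [1..<n+1]) = image_mset X (mset_set {1..n})"
    by (metis mset_map mset_upt atLeastLessThanSuc_atLeastAtMost Suc_eq_plus1)
  have "pmf_of_multiset (mset (map X [1..<n+1])) = map_pmf X (pmf_of_set {1..n})"
    unfolding eq1 by (rule map_pmf_of_set[OF fin, symmetric])
  hence "measure (empirical_measure (map X [1..<n+1])) A = measure (pmf_of_set {1..n}) (X -` A)"
    by (simp add: empirical_measure_def)
  also have "\<dots> = card ({1..n} \<inter> X -` A) / real n"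
    using fin by (simp add: measure_pmf_of_set)
  also have "real (card ({1..n} \<inter> X -` A)) = (\<Sum>k\<in>{1..n}. indicator (X -` A) k)"
    using sum.inter_restrict[OF fin(1), of "\<lambda>_. 1::real" "X -` A"] by (simp add: indicator_def vimage_def)
  also have "\<dots> = (\<Sum>k\<in>{1..n}. indicator A (X k))"
    by (simp add: indicator_def vimage_def)
  finally show ?thesis .
qed

lemma young_bound:
  fixes p a b :: real assumes p: "p \<ge> 1" and a: "a > 0" and b: "b \<ge> 0"
  shows "b powr (1/p) \<le> a powr (1/p - 1) / p * b + a powr (1/p) * (1 - 1/p)"
proof (cases "b = 0")
  case True then show ?thesis using p a by auto
next
  case False
  define t where "t = b / a"
  have t: "t > 0" using False b a by (simp add: t_def)
  have "t powr (1/p) * 1 powr (1 - 1/p) \<le> (1/p) * t + (1 - 1/p) * 1"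
    using p t by (intro Youngs_inequality_0) auto
  hence yt: "t powr (1/p) \<le> t / p + (1 - 1/p)" by simp
  have "b powr (1/p) = a powr (1/p) * t powr (1/p)"
    using a b by (simp add: t_def powr_divide)
  also have "\<dots> \<le> a powr (1/p) * (t / p + (1 - 1/p))"
    using yt by (intro mult_left_mono) auto
  also have "\<dots> = a powr (1/p) / a * b / p + a powr (1/p) * (1 - 1/p)"
    using a by (simp add: t_def field_simps)
  also have "a powr (1/p) / a = a powr (1/p - 1)"
    using a by (simp add: powr_diff)
  finally show ?thesis by (simp add: field_simps)
qed

lemma young_enn:
  fixes p a :: real and X B :: ennreal
  assumes p: "p \<ge> 1" and a: "a > 0" and XB: "X \<le> B"
  shows "(if X = \<infinity> then \<infinity> else ennreal (enn2real X powr (1 / p)))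
     \<le> ennreal (a powr (1/p - 1) / p) * B + ennreal (a powr (1/p) * (1 - 1/p))"
proof (cases "B = \<infinity>")
  case True
  have "ennreal (a powr (1/p - 1) / p) > 0" using a p by simp
  then have "ennreal (a powr (1/p - 1) / p) * B = \<infinity>" using True a p by (simp add: ennreal_mult_eq_top_iff)
  then show ?thesis by simp
next
  case False
  then have Xf: "X \<noteq> \<infinity>" using XB top.extremum_unique by auto
  have xb: "enn2real X \<le> enn2real B" using XB False by (simp add: enn2real_mono top.not_eq_extremum)
  have "enn2real X powr (1/p) \<le> enn2real B powr (1/p)"
    using xb p by (intro powr_mono2) auto
  also have "\<dots> \<le> a powr (1/p - 1) / p * enn2real B + a powr (1/p) * (1 - 1/p)"
    using p a by (intro young_bound) auto
  finally have "ennreal (enn2real X powr (1/p)) \<le> ennreal (a powr (1/p - 1) / p * enn2real B + a powr (1/p) * (1 - 1/p))"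
    by (rule ennreal_leI)
  also have "\<dots> = ennreal (a powr (1/p - 1) / p) * B + ennreal (a powr (1/p) * (1 - 1/p))"
  proof -
    define b where "b = enn2real B"
    have Bb: "B = ennreal b" using False by (simp add: b_def ennreal_enn2real top.not_eq_extremum)
    have b0: "b \<ge> 0" by (simp add: b_def)
    have r0: "a powr (1/p - 1) / p \<ge> 0" "a powr (1/p) * (1 - 1/p) \<ge> 0" using p a by auto
    show ?thesis unfolding Bb b_def[symmetric]
      using b0 r0 mult_nonneg_nonneg[OF b0 r0(1)] by (simp add: ennreal_plus[symmetric] ennreal_mult[symmetric] mult.commute del: ennreal_plus)
  qed
  finally show ?thesis using Xf by simp
qed



lemma main_bound:
  fixes \<gamma> \<mu> :: "'a::{real_inner, polish_space} measure" and P :: "'w measure"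
    and Xs :: "nat \<Rightarrow> 'w \<Rightarrow> 'a" and n :: nat and p s M :: real
  assumes p: "p \<ge> 1" and s: "s > 2 * p"
   and \<gamma>: "finite_measure \<gamma>" "sets \<gamma> = sets (restrict_space borel (sphere (0::'a) 1))" "emeasure \<gamma> (sphere 0 1) > 0"
   and \<mu>: "prob_space \<mu>" "sets \<mu> = sets borel" "moment s \<mu> = ennreal M"
   and P: "prob_space P" "prob_space.indep_vars P (\<lambda>_. borel) Xs {1..n}" "\<forall>k\<in>{1..n}. distr P borel (Xs k) = \<mu>"
   and n: "n \<ge> 1"
  shows "(\<integral>\<^sup>+\<omega>. sliced_W p \<gamma> (empirical_measure (map (\<lambda>k. Xs k \<omega>) [1..<n+1])) \<mu> \<partial>P)
     \<le> ennreal ((p * 2 powr p * Kc p s M) powr (1/p) * real n powr (-1/(2*p)))"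
proof -
  interpret P: prob_space P by fact
  interpret \<mu>: prob_space \<mu> by fact
  interpret \<gamma>: finite_measure \<gamma> by fact
  have sp\<mu>: "space \<mu> = UNIV" using \<mu>(2) sets_eq_imp_space_eq by fastforce
  have sp\<gamma>: "space \<gamma> = sphere 0 1" using sets_eq_imp_space_eq[OF \<gamma>(2)] by (simp add: space_restrict_space)
  have Xm[measurable]: "Xs k \<in> borel_measurable P" if "k \<in> {1..n}" for k
    using P(2) that unfolding P.indep_vars_def by auto
  define c where "c = p * 2 powr p"
  define G where "G = emeasure \<gamma> (sphere 0 1)"
  define F where "F \<theta> x = measure \<mu> {y. \<theta> \<bullet> y \<le> x}" for \<theta> :: 'a and x :: real
  define Dn where "Dn \<omega> \<theta> x = (\<Sum>k\<in>{1..n}. indicator {y. \<theta> \<bullet> y \<le> x} (Xs k \<omega>)) / real n - F \<theta> x" for \<omega> \<theta> x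
  define H where "H \<omega> \<theta> = (\<integral>\<^sup>+x. ennreal (\<bar>x\<bar> powr (p-1) * \<bar>Dn \<omega> \<theta> x\<bar>) \<partial>lborel)" for \<omega> \<theta>
  define emp where "emp \<omega> = empirical_measure (map (\<lambda>k. Xs k \<omega>) [1..<n+1])" for \<omega>
  define B where "B \<omega> = (\<integral>\<^sup>+\<theta>. ennreal c * H \<omega> \<theta> \<partial>\<gamma>) / G" for \<omega>
  define a where "a = c * Kc p s M / sqrt n"
  have c0: "c > 0" unfolding c_def using p by simp
  have Kc0: "Kc p s M > 0"
  proof -
    have "0 \<le> 2 * sqrt (max M 0 + 1) * (-1 / (p - 1 - s / 2 + 1))"
      using s by (intro mult_nonneg_nonneg) (auto simp: divide_nonneg_neg)
    then show ?thesis unfolding Kc_def by linarith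
  qed
  have a0: "a > 0" unfolding a_def using c0 Kc0 n by simp
  have G0: "G > 0" "G \<noteq> \<infinity>" using \<gamma>(3) by (auto simp: G_def)
  have inner_m[measurable]: "(\<lambda>y. \<theta> \<bullet> y) \<in> borel_measurable \<mu>" for \<theta> :: 'a
    by (subst measurable_cong_sets[OF \<mu>(2) refl]) simp
  have step1: "Wasserstein_pow p (proj_measure (emp \<omega>) \<theta>) (proj_measure \<mu> \<theta>) \<le> ennreal c * H \<omega> \<theta>" for \<omega> \<theta>
  proof -
    have d1: "real_distribution (proj_measure (emp \<omega>) \<theta>)"
      unfolding real_distribution_def real_distribution_axioms_def proj_measure_def emp_def empirical_measure_def
      by (auto intro!: measure_pmf.prob_space_distr)
    have d2: "real_distribution (proj_measure \<mu> \<theta>)"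
      unfolding real_distribution_def real_distribution_axioms_def proj_measure_def
      by (auto intro!: \<mu>.prob_space_distr)
    have c1: "cdf (proj_measure (emp \<omega>) \<theta>) x = (\<Sum>k\<in>{1..n}. indicator {y. \<theta> \<bullet> y \<le> x} (Xs k \<omega>)) / real n" for x
    proof -
      have "cdf (proj_measure (emp \<omega>) \<theta>) x = measure (emp \<omega>) {y. \<theta> \<bullet> y \<le> x}"
        unfolding cdf_def proj_measure_def emp_def empirical_measure_def
        by (subst measure_distr) (auto simp: vimage_def)
      also have "\<dots> = (\<Sum>k\<in>{1..n}. indicator {y. \<theta> \<bullet> y \<le> x} (Xs k \<omega>)) / real n"
        unfolding emp_def by (rule emp_prob[OF n])
      finally show ?thesis .
    qed
    have c2: "cdf (proj_measure \<mu> \<theta>) x = F \<theta> x" for x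
      unfolding cdf_def proj_measure_def F_def
      by (subst measure_distr) (auto simp: vimage_def sp\<mu>)
    have "Wasserstein_pow p (proj_measure (emp \<omega>) \<theta>) (proj_measure \<mu> \<theta>) \<le> ennreal (p * 2 powr p) *
     (\<integral>\<^sup>+x. ennreal (\<bar>x\<bar> powr (p-1) * \<bar>cdf (proj_measure (emp \<omega>) \<theta>) x - cdf (proj_measure \<mu> \<theta>) x\<bar>) \<partial>lborel)"
      by (rule W_bound[OF p d1 d2])
    also have "\<dots> = ennreal c * H \<omega> \<theta>"
      unfolding H_def c_def Dn_def c1 c2 ..
    finally show ?thesis .
  qed
  have step3: "sliced_W p \<gamma> (emp \<omega>) \<mu> \<le> ennreal (a powr (1/p - 1) / p) * B \<omega> + ennreal (a powr (1/p) * (1 - 1/p))" for \<omega>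
  proof -
    have "sliced_W_pow p \<gamma> (emp \<omega>) \<mu> \<le> B \<omega>"
      unfolding sliced_W_pow_def B_def G_def
      by (intro divide_right_mono_ennreal nn_integral_mono step1)
    then show ?thesis unfolding sliced_W_def by (rule young_enn[OF p a0])
  qed
  have idg: "(\<lambda>\<theta>. \<theta>) \<in> measurable \<gamma> (borel :: 'a measure)"
  proof -
    have "measurable \<gamma> (borel :: 'a measure) = measurable (restrict_space borel (sphere 0 1)) borel"
      by (rule measurable_cong_sets[OF \<gamma>(2) refl])
    then show ?thesis by (simp add: measurable_restrict_space1)
  qed
  interpret PG: pair_sigma_finite P \<gamma> by unfold_locales
  interpret PL: pair_sigma_finite P lborel by unfold_locales
  have Fm[measurable]: "(\<lambda>(\<theta>, x). F \<theta> x) \<in> borel_measurable (\<gamma> \<Otimes>\<^sub>M lborel)"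
  proof -
    define N where "N = (\<gamma> \<Otimes>\<^sub>M (lborel :: real measure)) \<Otimes>\<^sub>M \<mu>"
    define Q where "Q = {z \<in> space N. fst (fst z) \<bullet> snd z \<le> snd (fst z)}"
    have t1[measurable]: "(\<lambda>z. fst (fst z)) \<in> measurable N (borel :: 'a measure)"
      unfolding N_def by (rule measurable_compose[OF measurable_compose[OF measurable_fst measurable_fst] idg])
    have t3[measurable]: "snd \<in> measurable N (borel :: 'a measure)"
      unfolding N_def by (rule measurable_compose[OF measurable_snd]) (simp add: measurable_cong_sets[OF \<mu>(2) refl])
    have t4[measurable]: "(\<lambda>z. snd (fst z)) \<in> measurable N (borel :: real measure)"
      unfolding N_def by measurable
    have Q: "Q \<in> sets N" unfolding Q_def by (rule predE) measurable
    have "(\<lambda>w. emeasure \<mu> (Pair w -` Q)) \<in> borel_measurable (\<gamma> \<Otimes>\<^sub>M lborel)"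
      using Q unfolding N_def by (rule \<mu>.measurable_emeasure_Pair)
    hence "(\<lambda>w. enn2real (emeasure \<mu> (Pair w -` Q))) \<in> borel_measurable (\<gamma> \<Otimes>\<^sub>M lborel)"
      by measurable
    moreover have "enn2real (emeasure \<mu> (Pair w -` Q)) = (case w of (\<theta>, x) \<Rightarrow> F \<theta> x)" if w: "w \<in> space (\<gamma> \<Otimes>\<^sub>M lborel)" for w
    proof -
      have "Pair w -` Q = {y. fst w \<bullet> y \<le> snd w}"
        using w unfolding Q_def N_def by (auto simp: space_pair_measure sp\<mu>)
      then show ?thesis by (simp add: F_def measure_def case_prod_beta')
    qed
    ultimately show ?thesis using measurable_cong by (smt (verit))
  qed
  have t2[measurable]: "(\<lambda>z. snd (fst z)) \<in> measurable ((P \<Otimes>\<^sub>M \<gamma>) \<Otimes>\<^sub>M lborel) (borel :: 'a measure)"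
    by (rule measurable_compose[OF measurable_compose[OF measurable_fst measurable_snd] idg])
  have fm[measurable]: "(\<lambda>z. ennreal (\<bar>snd z\<bar> powr (p-1) * \<bar>Dn (fst (fst z)) (snd (fst z)) (snd z)\<bar>))
     \<in> borel_measurable ((P \<Otimes>\<^sub>M \<gamma>) \<Otimes>\<^sub>M lborel)"
  proof -
    have Sm[measurable]: "(\<lambda>z. (\<Sum>k\<in>{1..n}. indicator {y. snd (fst z) \<bullet> y \<le> snd z} (Xs k (fst (fst z)))) :: real)
       \<in> borel_measurable ((P \<Otimes>\<^sub>M \<gamma>) \<Otimes>\<^sub>M lborel)"
    proof (rule borel_measurable_sum)
      fix k assume k: "k \<in> {1..n}"
      have [measurable]: "Xs k \<in> borel_measurable P" using Xm[OF k] .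
      show "(\<lambda>z. indicator {y. snd (fst z) \<bullet> y \<le> snd z} (Xs k (fst (fst z))) :: real)
       \<in> borel_measurable ((P \<Otimes>\<^sub>M \<gamma>) \<Otimes>\<^sub>M lborel)"
        unfolding indicator_def mem_Collect_eq by measurable
    qed
    show ?thesis unfolding Dn_def by measurable
  qed
  have Hm[measurable]: "(\<lambda>w. H (fst w) (snd w)) \<in> borel_measurable (P \<Otimes>\<^sub>M \<gamma>)"
    unfolding H_def using fm by (intro lborel.borel_measurable_nn_integral) (simp add: case_prod_beta')
  have Bm[measurable]: "B \<in> borel_measurable P"
  proof -
    have "(\<lambda>\<omega>. \<integral>\<^sup>+\<theta>. ennreal c * H \<omega> \<theta> \<partial>\<gamma>) \<in> borel_measurable P"
      by (intro \<gamma>.borel_measurable_nn_integral) (simp add: case_prod_beta')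
    then show ?thesis unfolding B_def divide_ennreal_def by measurable
  qed
  have EH: "(\<integral>\<^sup>+\<omega>. H \<omega> \<theta> \<partial>P) \<le> ennreal (Kc p s M / sqrt n)" if th: "\<theta> \<in> sphere 0 1" for \<theta>
  proof -
    have th': "\<theta> \<in> space \<gamma>" using th sp\<gamma> by simp
    have nth: "norm \<theta> = 1" using th by simp
    have pm: "(\<lambda>z. ((fst z, \<theta>), snd z)) \<in> measurable (P \<Otimes>\<^sub>M lborel) ((P \<Otimes>\<^sub>M \<gamma>) \<Otimes>\<^sub>M lborel)"
      by (rule measurable_Pair[OF measurable_Pair[OF measurable_fst measurable_const[OF th']] measurable_snd])
    have gm: "(\<lambda>z. ennreal (\<bar>snd z\<bar> powr (p-1) * \<bar>Dn (fst z) \<theta> (snd z)\<bar>)) \<in> borel_measurable (P \<Otimes>\<^sub>M lborel)"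
      using measurable_compose[OF pm fm] by simp
    have Dm: "(\<lambda>\<omega>. Dn \<omega> \<theta> x) \<in> borel_measurable P" for x
    proof -
      have "(\<lambda>\<omega>. (\<Sum>k\<in>{1..n}. indicator {y. \<theta> \<bullet> y \<le> x} (Xs k \<omega>)) :: real) \<in> borel_measurable P"
      proof (rule borel_measurable_sum)
        fix k assume k: "k \<in> {1..n}"
        have [measurable]: "Xs k \<in> borel_measurable P" using Xm[OF k] .
        show "(\<lambda>\<omega>. indicator {y. \<theta> \<bullet> y \<le> x} (Xs k \<omega>) :: real) \<in> borel_measurable P"
          unfolding indicator_def mem_Collect_eq by measurable
      qed
      then show ?thesis unfolding Dn_def by measurable
    qed
    have hm: "(\<lambda>x. ennreal (\<bar>x\<bar> powr (p-1) * sqrt (mfun s M x))) \<in> borel_measurable lborel"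
      unfolding mfun_def by measurable
    have inner: "(\<integral>\<^sup>+\<omega>. ennreal (\<bar>x\<bar> powr (p-1) * \<bar>Dn \<omega> \<theta> x\<bar>) \<partial>P)
        \<le> ennreal (\<bar>x\<bar> powr (p-1) * sqrt (mfun s M x)) * ennreal (1 / sqrt n)" for x
    proof -
      have "(\<integral>\<^sup>+\<omega>. ennreal (\<bar>x\<bar> powr (p-1) * \<bar>Dn \<omega> \<theta> x\<bar>) \<partial>P)
          = (\<integral>\<^sup>+\<omega>. ennreal (\<bar>x\<bar> powr (p-1)) * ennreal \<bar>Dn \<omega> \<theta> x\<bar> \<partial>P)"
        by (simp add: ennreal_mult)
      also have "\<dots> = ennreal (\<bar>x\<bar> powr (p-1)) * (\<integral>\<^sup>+\<omega>. ennreal \<bar>Dn \<omega> \<theta> x\<bar> \<partial>P)"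
        using Dm[of x] by (intro nn_integral_cmult) measurable
      also have "(\<integral>\<^sup>+\<omega>. ennreal \<bar>Dn \<omega> \<theta> x\<bar> \<partial>P) \<le> ennreal (sqrt (mfun s M x / n))"
        unfolding Dn_def
      proof (rule P.var_bound[OF P(2)])
        show "distr P borel (Xs k) = \<mu>" if "k \<in> {1..n}" for k using P(3) that by auto
        show "{y. \<theta> \<bullet> y \<le> x} \<in> sets borel" by measurable
        show "measure \<mu> {y. \<theta> \<bullet> y \<le> x} = F \<theta> x" by (simp add: F_def)
        show "n \<ge> 1" by (rule n)
        show "mfun s M x > 0" by (rule mfun_pos)
        show "F \<theta> x * (1 - F \<theta> x) \<le> mfun s M x"
          unfolding F_def using \<mu> nth s p by (intro Fvar) auto
      qed
      also have "sqrt (mfun s M x / n) = sqrt (mfun s M x) * (1 / sqrt n)"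
        by (simp add: real_sqrt_divide)
      also have "ennreal (\<bar>x\<bar> powr (p-1)) * ennreal (sqrt (mfun s M x) * (1 / sqrt n))
          = ennreal (\<bar>x\<bar> powr (p-1) * sqrt (mfun s M x)) * ennreal (1 / sqrt n)"
      proof -
        have a0: "0 \<le> \<bar>x\<bar> powr (p-1)" "0 \<le> \<bar>x\<bar> powr (p-1) * sqrt (mfun s M x)"
          using mfun_pos[of s M x] by auto
        show ?thesis
          using ennreal_mult'[OF a0(1), of "sqrt (mfun s M x) * (1 / sqrt n)"]
                ennreal_mult'[OF a0(2), of "1 / sqrt n"] by (simp add: mult.assoc)
      qed
      finally show ?thesis by (simp add: mult_left_mono)
    qed
    have "(\<integral>\<^sup>+\<omega>. H \<omega> \<theta> \<partial>P) = (\<integral>\<^sup>+x. (\<integral>\<^sup>+\<omega>. ennreal (\<bar>x\<bar> powr (p-1) * \<bar>Dn \<omega> \<theta> x\<bar>) \<partial>P) \<partial>lborel)"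
      unfolding H_def using gm by (intro PL.Fubini'[symmetric]) (simp add: case_prod_beta')
    also have "\<dots> \<le> (\<integral>\<^sup>+x. ennreal (\<bar>x\<bar> powr (p-1) * sqrt (mfun s M x)) * ennreal (1 / sqrt n) \<partial>lborel)"
      by (intro nn_integral_mono inner)
    also have "\<dots> = (\<integral>\<^sup>+x. ennreal (\<bar>x\<bar> powr (p-1) * sqrt (mfun s M x)) \<partial>lborel) * ennreal (1 / sqrt n)"
      using hm by (rule nn_integral_multc)
    also have "\<dots> \<le> ennreal (Kc p s M) * ennreal (1 / sqrt n)"
      by (intro mult_right_mono K_bound p s) auto
    also have "\<dots> = ennreal (Kc p s M / sqrt n)"
      using Kc0 by (simp add: ennreal_mult[symmetric])
    finally show ?thesis .
  qed
  have EB: "(\<integral>\<^sup>+\<omega>. B \<omega> \<partial>P) \<le> ennreal a"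
  proof -
    have "(\<integral>\<^sup>+\<omega>. B \<omega> \<partial>P) = (\<integral>\<^sup>+\<omega>. (\<integral>\<^sup>+\<theta>. ennreal c * H \<omega> \<theta> \<partial>\<gamma>) \<partial>P) / G"
      unfolding B_def divide_ennreal_def by (rule nn_integral_multc) measurable
    also have "(\<integral>\<^sup>+\<omega>. (\<integral>\<^sup>+\<theta>. ennreal c * H \<omega> \<theta> \<partial>\<gamma>) \<partial>P)
       = (\<integral>\<^sup>+\<theta>. (\<integral>\<^sup>+\<omega>. ennreal c * H \<omega> \<theta> \<partial>P) \<partial>\<gamma>)"
      by (rule PG.Fubini'[symmetric]) measurable
    also have "\<dots> \<le> (\<integral>\<^sup>+\<theta>. ennreal a \<partial>\<gamma>)"
    proof (rule nn_integral_mono)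
      fix \<theta> assume th: "\<theta> \<in> space \<gamma>"
      have "(\<lambda>\<omega>. H \<omega> \<theta>) \<in> borel_measurable P"
        using measurable_compose[OF measurable_Pair[OF measurable_ident_sets[OF refl] measurable_const[OF th]] Hm]
        by simp
      then have "(\<integral>\<^sup>+\<omega>. ennreal c * H \<omega> \<theta> \<partial>P) = ennreal c * (\<integral>\<^sup>+\<omega>. H \<omega> \<theta> \<partial>P)"
        by (rule nn_integral_cmult)
      also have "\<dots> \<le> ennreal c * ennreal (Kc p s M / sqrt n)"
        using th sp\<gamma> by (intro mult_left_mono EH) auto
      also have "\<dots> = ennreal a" unfolding a_def using c0 Kc0 by (simp add: ennreal_mult[symmetric])
      finally show "(\<integral>\<^sup>+\<omega>. ennreal c * H \<omega> \<theta> \<partial>P) \<le> ennreal a" .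
    qed
    also have "\<dots> = ennreal a * G" by (simp add: G_def sp\<gamma>)
    finally have "(\<integral>\<^sup>+\<omega>. B \<omega> \<partial>P) \<le> ennreal a * G / G" by (simp add: divide_right_mono_ennreal)
    also have "ennreal a * G / G = ennreal a" using G0 by (simp add: ennreal_times_divide[symmetric] ennreal_divide_self top.not_eq_extremum)
    finally show ?thesis .
  qed
  have "(\<integral>\<^sup>+\<omega>. sliced_W p \<gamma> (emp \<omega>) \<mu> \<partial>P)
     \<le> (\<integral>\<^sup>+\<omega>. ennreal (a powr (1/p - 1) / p) * B \<omega> + ennreal (a powr (1/p) * (1 - 1/p)) \<partial>P)"
    by (intro nn_integral_mono step3)
  also have "\<dots> = ennreal (a powr (1/p - 1) / p) * (\<integral>\<^sup>+\<omega>. B \<omega> \<partial>P) + ennreal (a powr (1/p) * (1 - 1/p))"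
    by (simp add: nn_integral_add nn_integral_cmult P.emeasure_space_1)
  also have "\<dots> \<le> ennreal (a powr (1/p - 1) / p) * ennreal a + ennreal (a powr (1/p) * (1 - 1/p))"
    by (intro add_right_mono mult_left_mono EB) auto
  also have "\<dots> = ennreal (a powr (1/p))"
  proof -
    have "a powr (1/p - 1) / p * a + a powr (1/p) * (1 - 1/p) = a powr (1/p)"
    proof -
      have e: "a powr (1/p - 1) = a powr (1/p) / a" using a0 by (simp add: powr_diff)
      show ?thesis unfolding e using a0 p by (simp add: field_simps)
    qed
    moreover have "a powr (1/p - 1) / p \<ge> 0" "a powr (1/p) * (1 - 1/p) \<ge> 0" using p a0 by auto
    moreover have "0 \<le> a powr (1/p - 1) / p * a" using p a0 by simp
    ultimately show ?thesis using a0
      ennreal_plus[of "a powr (1/p - 1) / p * a" "a powr (1/p) * (1-1/p)"] ennreal_mult[of "a powr (1/p - 1) / p" a]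
      by (simp del: ennreal_plus)
  qed
  also have "a powr (1/p) = (p * 2 powr p * Kc p s M) powr (1/p) * real n powr (-1/(2*p))"
  proof -
    have n0: "real n > 0" using n by simp
    have sq: "sqrt (real n) = real n powr (1/2)" using n0 by (simp add: powr_half_sqrt)
    have e1: "a powr (1/p) = (c * Kc p s M) powr (1/p) / (real n powr (1/2)) powr (1/p)"
      unfolding a_def sq using c0 Kc0 n0 by (simp add: powr_divide)
    have e2: "(real n powr (1/2)) powr (1/p) = real n powr (1/(2*p))"
      by (simp add: powr_powr)
    have e3: "real n powr (-1/(2*p)) = inverse (real n powr (1/(2*p)))"
      using n0 by (simp add: powr_minus[symmetric])
    show ?thesis unfolding e1 e2 e3 c_def by (simp only: divide_inverse)
  qed
  finally show ?thesis unfolding emp_def .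
qed


theorem mainTheorem8:
  fixes p s M :: real
  assumes inf_dim: "\<not> (\<exists>B :: ('a::{real_inner, polish_space}) set. finite B \<and> span B = UNIV)"
    and p: "p \<ge> 1" and s: "s > 2 * p"
  shows "\<exists>C :: real. \<forall>(\<gamma> :: 'a measure) (\<mu> :: 'a measure) (P :: 'w measure) (Xs :: nat \<Rightarrow> 'w \<Rightarrow> 'a) (n :: nat).
    (finite_measure \<gamma> \<and> sets \<gamma> = sets (restrict_space borel (sphere (0::'a) 1))
     \<and> emeasure \<gamma> (sphere 0 1) > 0
     \<and> prob_space \<mu> \<and> sets \<mu> = sets (borel :: 'a measure) \<and> moment s \<mu> = ennreal M
     \<and> prob_space P \<and> prob_space.indep_vars P (\<lambda>_. borel) Xs {1..n}
     \<and> (\<forall>k\<in>{1..n}. distr P borel (Xs k) = \<mu>) \<and> n \<ge> 1)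
    \<longrightarrow> (\<integral>\<^sup>+ \<omega>. sliced_W p \<gamma> (empirical_measure (map (\<lambda>k. Xs k \<omega>) [1..<n+1])) \<mu> \<partial>P)
          \<le> ennreal (C * real n powr (- 1 / (2 * p)))"
  proof -
  show ?thesis
  proof (rule exI[where x = "(p * 2 powr p * Kc p s M) powr (1/p)"], intro allI impI, elim conjE)
    fix \<gamma> \<mu> :: "'a measure" and P :: "'w measure" and Xs :: "nat \<Rightarrow> 'w \<Rightarrow> 'a" and n :: nat
    assume h: "finite_measure \<gamma>" "sets \<gamma> = sets (restrict_space borel (sphere (0::'a) 1))"
      "emeasure \<gamma> (sphere 0 1) > 0" "prob_space \<mu>" "sets \<mu> = sets (borel :: 'a measure)" "moment s \<mu> = ennreal M"
      "prob_space P" "prob_space.indep_vars P (\<lambda>_. borel) Xs {1..n}"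
      "\<forall>k\<in>{1..n}. distr P borel (Xs k) = \<mu>" "n \<ge> 1"
    show "(\<integral>\<^sup>+ \<omega>. sliced_W p \<gamma> (empirical_measure (map (\<lambda>k. Xs k \<omega>) [1..<n+1])) \<mu> \<partial>P)
          \<le> ennreal ((p * 2 powr p * Kc p s M) powr (1/p) * real n powr (- 1 / (2 * p)))"
      by (rule main_bound[OF p s h])
  qed
qed

end
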